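(* Let $K\subset\mathbb E$ be a regular cone and $F$ a normal barrier for $K$. The following are equivalent: (1) $F$ has negative curvature; (2) for every $x\in\operatorname{int}K$ and $h\in\mathbb E$, $-\nabla^3F(x)[h,h]\in K^*$; (3) for every $x\in\operatorname{int}K$ and $h\in\mathbb E$ with $x+h\in\operatorname{int}K$, $\nabla^2F(x)h-(\nabla F(x+h)-\nabla F(x))\in K^*$.
   Context: $\mathbb E$ finite-dimensional real space, dual $\mathbb E^*$, pairing $\langle\cdot,\cdot\rangle$. $K$ regular: closed, convex, pointed, nonempty interior; $K^*=\{s\in\mathbb E^*:\langle s,x\rangle\ge0\ \forall x\in K\}$. A normal barrier for $K$ is a self-concordant barrier $F$ on $\operatorname{int}K$ which is logarithmically homogeneous: $F(\tau x)=F(x)-\nu\ln\tau$ for some $\nu$ and all $\tau>0$. $\nabla^3F(x)[h]$ denotes the self-adjoint operator $\mathbb E\to\mathbb E^*$ with $\langle\nabla^3F(x)[h]u,w\rangle=D^3F(x)[h,u,w]$, and $\nabla^3F(x)[h,h]\in\mathbb E^*$ is the vector $u\mapsto D^3F(x)[h,h,u]$. Definition: $F$ has negative curvature if $\nabla^3F(x)[h]\preceq0$ (i.e. $D^3F(x)[h,u,u]\le0$ for all $u\in\mathbb E$) for every $x\in\operatorname{int}K$ and every $h\in K$. *)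

theory Defs
  imports "HOL-Analysis.Analysis"
begin

text \<open>The space E is a finite-dimensional real inner product space ('a :: euclidean_space);
  the dual space E* is identified with E via the inner product, so that the pairing
  <s,x> is s \<bullet> x.\<close>

definition regular_cone :: "'a::euclidean_space set \<Rightarrow> bool" where
  "regular_cone K \<longleftrightarrow> closed K \<and> convex K \<and> cone K \<and> K \<noteq> {} \<and>
     K \<inter> uminus ` K = {0} \<and> interior K \<noteq> {}"

definition dual_cone :: "'a::euclidean_space set \<Rightarrow> 'a set" where
  "dual_cone K = {s. \<forall>x\<in>K. 0 \<le> s \<bullet> x}"

text \<open>g, H, T are the gradient, Hessian and third derivative of F on int K:
  DF(x)[h] = g x \<bullet> h, D2F(x)[h,u] = (H x h) \<bullet> u, D3F(x)[h,u,w] = (T x h u) \<bullet> w.\<close>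

definition C3_on :: "'a::euclidean_space set \<Rightarrow> ('a \<Rightarrow> real) \<Rightarrow> ('a \<Rightarrow> 'a)
     \<Rightarrow> ('a \<Rightarrow> 'a \<Rightarrow>\<^sub>L 'a) \<Rightarrow> ('a \<Rightarrow> 'a \<Rightarrow>\<^sub>L 'a \<Rightarrow>\<^sub>L 'a) \<Rightarrow> bool" where
  "C3_on U F g H T \<longleftrightarrow>
     (\<forall>x\<in>U. (F has_derivative (\<lambda>h. g x \<bullet> h)) (at x)) \<and>
     (\<forall>x\<in>U. (g has_derivative blinfun_apply (H x)) (at x)) \<and>
     (\<forall>x\<in>U. (H has_derivative blinfun_apply (T x)) (at x)) \<and>
     continuous_on U T"

definition D2 :: "('a::euclidean_space \<Rightarrow> 'a \<Rightarrow>\<^sub>L 'a) \<Rightarrow> 'a \<Rightarrow> 'a \<Rightarrow> 'a \<Rightarrow> real" where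
  "D2 H x h u = blinfun_apply (H x) h \<bullet> u"

definition D3 :: "('a::euclidean_space \<Rightarrow> 'a \<Rightarrow>\<^sub>L 'a \<Rightarrow>\<^sub>L 'a) \<Rightarrow> 'a \<Rightarrow> 'a \<Rightarrow> 'a \<Rightarrow> 'a \<Rightarrow> real" where
  "D3 T x h u w = blinfun_apply (blinfun_apply (T x) h) u \<bullet> w"

definition D3vec :: "('a::euclidean_space \<Rightarrow> 'a \<Rightarrow>\<^sub>L 'a \<Rightarrow>\<^sub>L 'a) \<Rightarrow> 'a \<Rightarrow> 'a \<Rightarrow> 'a" where
  "D3vec T x h = blinfun_apply (blinfun_apply (T x) h) h"

definition self_concordant_barrier :: "'a::euclidean_space set \<Rightarrow> real \<Rightarrow> ('a \<Rightarrow> real) \<Rightarrow> ('a \<Rightarrow> 'a)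
     \<Rightarrow> ('a \<Rightarrow> 'a \<Rightarrow>\<^sub>L 'a) \<Rightarrow> ('a \<Rightarrow> 'a \<Rightarrow>\<^sub>L 'a \<Rightarrow>\<^sub>L 'a) \<Rightarrow> bool" where
  "self_concordant_barrier K \<nu> F g H T \<longleftrightarrow>
     C3_on (interior K) F g H T \<and>
     convex_on (interior K) F \<and>
     (\<forall>x\<in>interior K. \<forall>h. \<bar>D3 T x h h h\<bar> \<le> 2 * (D2 H x h h) powr (3/2)) \<and>
     (\<forall>xs y. (\<forall>i. xs i \<in> interior K) \<longrightarrow> xs \<longlonglongrightarrow> y \<longrightarrow> y \<in> frontier K \<longrightarrow>
        filterlim (\<lambda>i. F (xs i)) at_top sequentially) \<and>
     (\<forall>x\<in>interior K. \<forall>h. (g x \<bullet> h)\<^sup>2 \<le> \<nu> * D2 H x h h)"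

definition normal_barrier :: "'a::euclidean_space set \<Rightarrow> real \<Rightarrow> ('a \<Rightarrow> real) \<Rightarrow> ('a \<Rightarrow> 'a)
     \<Rightarrow> ('a \<Rightarrow> 'a \<Rightarrow>\<^sub>L 'a) \<Rightarrow> ('a \<Rightarrow> 'a \<Rightarrow>\<^sub>L 'a \<Rightarrow>\<^sub>L 'a) \<Rightarrow> bool" where
  "normal_barrier K \<nu> F g H T \<longleftrightarrow>
     self_concordant_barrier K \<nu> F g H T \<and>
     (\<forall>x\<in>interior K. \<forall>\<tau>>0. F (\<tau> *\<^sub>R x) = F x - \<nu> * ln \<tau>)"

definition negative_curvature :: "'a::euclidean_space set \<Rightarrow> ('a \<Rightarrow> 'a \<Rightarrow>\<^sub>L 'a \<Rightarrow>\<^sub>L 'a) \<Rightarrow> bool" where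
  "negative_curvature K T \<longleftrightarrow> (\<forall>x\<in>interior K. \<forall>h\<in>K. \<forall>u. D3 T x h u u \<le> 0)"

end

theory Submission
  imports Defs
begin

lemma line_deriv_vec:
  fixes f :: "'a::euclidean_space \<Rightarrow> 'a"
  assumes "(f has_derivative f') (at (x + t *\<^sub>R h))"
  shows "((\<lambda>s. f (x + s *\<^sub>R h) \<bullet> w) has_real_derivative (f' h \<bullet> w)) (at t)"
proof -
  have l: "linear f'" using assms has_derivative_linear by blast
  have d1: "((\<lambda>s. x + s *\<^sub>R h) has_derivative (\<lambda>s. s *\<^sub>R h)) (at t)"
    by (auto intro!: derivative_eq_intros)
  have d2: "((\<lambda>s. f (x + s *\<^sub>R h)) has_derivative (\<lambda>s. f' (s *\<^sub>R h))) (at t)"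
    using has_derivative_compose[OF d1] assms by blast
  have d3: "((\<lambda>s. f (x + s *\<^sub>R h) \<bullet> w) has_derivative (\<lambda>s. f' (s *\<^sub>R h) \<bullet> w)) (at t)"
    using has_derivative_inner_left[OF d2] .
  have "(\<lambda>s. f' (s *\<^sub>R h) \<bullet> w) = (*) (f' h \<bullet> w)"
    by (auto simp: fun_eq_iff linear.scaleR[OF l])
  then show ?thesis unfolding has_field_derivative_def
    using d3 by simp
qed

lemma line_deriv_sc:
  fixes f :: "'a::euclidean_space \<Rightarrow> real"
  assumes "(f has_derivative (\<lambda>v. G (x + t *\<^sub>R h) \<bullet> v)) (at (x + t *\<^sub>R h))"
  shows "((\<lambda>s. f (x + s *\<^sub>R h)) has_real_derivative (G (x + t *\<^sub>R h) \<bullet> h)) (at t)"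
proof -
  have d1: "((\<lambda>s. x + s *\<^sub>R h) has_derivative (\<lambda>s. s *\<^sub>R h)) (at t)"
    by (auto intro!: derivative_eq_intros)
  have d2: "((\<lambda>s. f (x + s *\<^sub>R h)) has_derivative (\<lambda>s. G (x + t *\<^sub>R h) \<bullet> (s *\<^sub>R h))) (at t)"
    using has_derivative_compose[OF d1] assms by blast
  have "(\<lambda>s. G (x + t *\<^sub>R h) \<bullet> (s *\<^sub>R h)) = (*) (G (x + t *\<^sub>R h) \<bullet> h)"
    by (auto simp: fun_eq_iff)
  then show ?thesis unfolding has_field_derivative_def
    using d2 by simp
qed

lemma delta_approx:
  fixes f :: "'a::euclidean_space \<Rightarrow> real" and G :: "'a \<Rightarrow> 'a"
  assumes r: "r > 0" "ball x r \<subseteq> U"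
    and df: "\<forall>y\<in>U. (f has_derivative (\<lambda>v. G y \<bullet> v)) (at y)"
    and dG: "(G has_derivative L) (at x)"
    and e: "e > 0"
  shows "\<exists>\<delta>>0. \<forall>t. 0 < t \<and> t < \<delta> \<longrightarrow>
     \<bar>(f (x + t *\<^sub>R a + t *\<^sub>R b) - f (x + t *\<^sub>R a) - f (x + t *\<^sub>R b) + f x) - t\<^sup>2 * (L a \<bullet> b)\<bar>
       \<le> 2 * e * t\<^sup>2 * (norm a + norm b)\<^sup>2"
proof -
  have lin: "linear L" using dG has_derivative_linear by blast
  obtain d where d: "d > 0" and dd: "\<And>y. norm (y - x) < d \<Longrightarrow> norm (G y - G x - L (y - x)) \<le> e * norm (y - x)"
    using dG e unfolding has_derivative_at_alt by blast
  have inU: "\<And>y. norm (y - x) < r \<Longrightarrow> y \<in> U"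
    using r(2) by (auto simp: dist_norm norm_minus_commute subset_iff)
  define C where "C = norm a + norm b"
  have C0: "C \<ge> 0" unfolding C_def by simp
  define \<delta> where "\<delta> = min d r / (C + 1)"
  have \<delta>0: "\<delta> > 0" unfolding \<delta>_def using d r C0 by simp
  have "\<forall>t. 0 < t \<and> t < \<delta> \<longrightarrow>
     \<bar>(f (x + t *\<^sub>R a + t *\<^sub>R b) - f (x + t *\<^sub>R a) - f (x + t *\<^sub>R b) + f x) - t\<^sup>2 * (L a \<bullet> b)\<bar>
       \<le> 2 * e * t\<^sup>2 * C\<^sup>2"
  proof (intro allI impI)
    fix t :: real assume t: "0 < t \<and> t < \<delta>"
    have "t * (C + 1) < min d r" using t C0 unfolding \<delta>_def by (simp add: pos_less_divide_eq)
    then have tC: "t * C < min d r" using t by (smt (verit) mult_left_mono)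
    have np: "norm ((x + t *\<^sub>R a + s *\<^sub>R b) - x) \<le> t * C" if "0 \<le> s" "s \<le> t" for s
    proof -
      have "norm ((x + t *\<^sub>R a + s *\<^sub>R b) - x) \<le> norm (t *\<^sub>R a) + norm (s *\<^sub>R b)"
        by (metis add_diff_cancel_left' add.assoc norm_triangle_ineq)
      also have "\<dots> \<le> t * norm a + t * norm b" using that t by (simp add: mult_right_mono)
      finally show ?thesis unfolding C_def by (simp add: distrib_left)
    qed
    have nq: "norm ((x + s *\<^sub>R b) - x) \<le> t * C" if "0 \<le> s" "s \<le> t" for s
    proof -
      have "norm ((x + s *\<^sub>R b) - x) = s * norm b" using that by simp
      also have "\<dots> \<le> t * norm b" using that by (simp add: mult_right_mono)
      also have "\<dots> \<le> t * C" unfolding C_def using t by (simp add: mult_left_mono)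
      finally show ?thesis .
    qed
    define k where "k s = f ((x + t *\<^sub>R a) + s *\<^sub>R b) - f (x + s *\<^sub>R b)" for s
    have dk: "DERIV k s :> (G (x + t *\<^sub>R a + s *\<^sub>R b) \<bullet> b - G (x + s *\<^sub>R b) \<bullet> b)"
      if "0 \<le> s" "s \<le> t" for s
    proof -
      have "x + t *\<^sub>R a + s *\<^sub>R b \<in> U"
        using np[OF that] tC by (intro inU) auto
      then have 1: "((\<lambda>s. f ((x + t *\<^sub>R a) + s *\<^sub>R b)) has_real_derivative (G (x + t *\<^sub>R a + s *\<^sub>R b) \<bullet> b)) (at s)"
        using df by (intro line_deriv_sc) auto
      have "x + s *\<^sub>R b \<in> U"
        using nq[OF that] tC by (intro inU) auto
      then have 2: "((\<lambda>s. f (x + s *\<^sub>R b)) has_real_derivative (G (x + s *\<^sub>R b) \<bullet> b)) (at s)"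
        using df by (intro line_deriv_sc) auto
      show ?thesis unfolding k_def using DERIV_diff[OF 1 2] .
    qed
    obtain z where z: "0 < z" "z < t" and kz: "k t - k 0 = (t - 0) * (G (x + t *\<^sub>R a + z *\<^sub>R b) \<bullet> b - G (x + z *\<^sub>R b) \<bullet> b)"
      using MVT2[of 0 t k, OF _ dk] t by auto
    define p where "p = x + t *\<^sub>R a + z *\<^sub>R b"
    define q where "q = x + z *\<^sub>R b"
    have Lpq: "L (p - x) - L (q - x) = t *\<^sub>R L a"
      unfolding p_def q_def by (simp add: linear_add[OF lin] linear_scale[OF lin])
    have "G p - G q - t *\<^sub>R L a = (G p - G x - L (p - x)) - (G q - G x - L (q - x))"
      using Lpq by (simp add: algebra_simps)
    then have "norm (G p - G q - t *\<^sub>R L a) \<le> norm (G p - G x - L (p - x)) + norm (G q - G x - L (q - x))"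
      by (metis norm_triangle_ineq4)
    also have "\<dots> \<le> e * norm (p - x) + e * norm (q - x)"
      using dd np[of z] nq[of z] z tC unfolding p_def q_def by (intro add_mono dd) auto
    also have "\<dots> \<le> e * (t * C) + e * (t * C)"
      using np[of z] nq[of z] z e unfolding p_def q_def by (intro add_mono mult_left_mono) auto
    finally have nG: "norm (G p - G q - t *\<^sub>R L a) \<le> 2 * e * t * C" by (simp add: algebra_simps)
    have "\<bar>(G p - G q - t *\<^sub>R L a) \<bullet> b\<bar> \<le> norm (G p - G q - t *\<^sub>R L a) * norm b"
      by (rule Cauchy_Schwarz_ineq2)
    also have "\<dots> \<le> (2 * e * t * C) * C"
      using nG C0 e t unfolding C_def by (intro mult_mono) auto
    finally have b1: "\<bar>(G p - G q - t *\<^sub>R L a) \<bullet> b\<bar> \<le> 2 * e * t * C * C" .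
    have eq: "(f (x + t *\<^sub>R a + t *\<^sub>R b) - f (x + t *\<^sub>R a) - f (x + t *\<^sub>R b) + f x) - t\<^sup>2 * (L a \<bullet> b)
       = t * ((G p - G q - t *\<^sub>R L a) \<bullet> b)"
      using kz unfolding k_def p_def q_def by (simp add: algebra_simps inner_diff_left power2_eq_square)
    show "\<bar>(f (x + t *\<^sub>R a + t *\<^sub>R b) - f (x + t *\<^sub>R a) - f (x + t *\<^sub>R b) + f x) - t\<^sup>2 * (L a \<bullet> b)\<bar>
       \<le> 2 * e * t\<^sup>2 * C\<^sup>2"
      unfolding eq using b1 t by (simp add: abs_mult power2_eq_square mult_left_mono mult.assoc mult.left_commute)
  qed
  then show ?thesis using \<delta>0 unfolding C_def by blast
qed

lemma schwarz:
  fixes f :: "'a::euclidean_space \<Rightarrow> real" and G :: "'a \<Rightarrow> 'a"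
  assumes U: "open U" "x \<in> U"
    and df: "\<forall>y\<in>U. (f has_derivative (\<lambda>v. G y \<bullet> v)) (at y)"
    and dG: "(G has_derivative L) (at x)"
  shows "L a \<bullet> b = L b \<bullet> a"
proof (rule ccontr)
  assume ne: "L a \<bullet> b \<noteq> L b \<bullet> a"
  define D where "D = \<bar>L a \<bullet> b - L b \<bullet> a\<bar>"
  have D0: "D > 0" using ne unfolding D_def by simp
  define C where "C = (norm a + norm b)\<^sup>2"
  have C0: "C \<ge> 0" unfolding C_def by simp
  define e where "e = D / (8 * (C + 1))"
  have e0: "e > 0" unfolding e_def using D0 C0 by simp
  obtain r where r: "r > 0" "ball x r \<subseteq> U" using U openE by blast
  define \<Delta> where "\<Delta> t = f (x + t *\<^sub>R a + t *\<^sub>R b) - f (x + t *\<^sub>R a) - f (x + t *\<^sub>R b) + f x" for t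
  obtain d1 where d1: "d1 > 0" "\<And>t. 0 < t \<and> t < d1 \<Longrightarrow> \<bar>\<Delta> t - t\<^sup>2 * (L a \<bullet> b)\<bar> \<le> 2 * e * t\<^sup>2 * C"
    using delta_approx[OF r df dG e0, of a b] unfolding \<Delta>_def C_def by blast
  obtain d2 where d2: "d2 > 0" "\<And>t. 0 < t \<and> t < d2 \<Longrightarrow> \<bar>\<Delta> t - t\<^sup>2 * (L b \<bullet> a)\<bar> \<le> 2 * e * t\<^sup>2 * C"
  proof -
    have sw: "\<And>t. x + t *\<^sub>R b + t *\<^sub>R a = x + t *\<^sub>R a + t *\<^sub>R b" by (simp add: algebra_simps)
    have "\<And>t. \<Delta> t = f (x + t *\<^sub>R b + t *\<^sub>R a) - f (x + t *\<^sub>R b) - f (x + t *\<^sub>R a) + f x"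
      unfolding \<Delta>_def sw by simp
    then show ?thesis using delta_approx[OF r df dG e0, of b a] that unfolding C_def
      by (metis add.commute)
  qed
  define t where "t = min d1 d2 / 2"
  have t: "0 < t" "t < d1" "t < d2" unfolding t_def using d1 d2 by auto
  have "\<bar>t\<^sup>2 * (L a \<bullet> b) - t\<^sup>2 * (L b \<bullet> a)\<bar> \<le> 4 * e * t\<^sup>2 * C"
    using d1(2)[of t] d2(2)[of t] t by linarith
  moreover have "t\<^sup>2 * D = \<bar>t\<^sup>2 * (L a \<bullet> b) - t\<^sup>2 * (L b \<bullet> a)\<bar>"
    unfolding D_def by (simp add: abs_mult flip: right_diff_distrib)
  ultimately have "t\<^sup>2 * D \<le> t\<^sup>2 * (4 * e * C)" by (simp add: mult_ac)
  then have "D \<le> 4 * e * C" using t by simp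
  also have "4 * e * C < D"
  proof -
    have "4 * e * C = D * (4 * C / (8 * (C + 1)))" unfolding e_def by simp
    also have "4 * C / (8 * (C + 1)) < 1" using C0 by simp
    then have "D * (4 * C / (8 * (C + 1))) < D * 1" using D0 by (intro mult_strict_left_mono) auto
    finally show ?thesis by simp
  qed
  finally show False by simp
qed


lemma dH_apply:
  fixes H :: "'a::euclidean_space \<Rightarrow> 'a \<Rightarrow>\<^sub>L 'a" and T :: "'a \<Rightarrow> 'a \<Rightarrow>\<^sub>L 'a \<Rightarrow>\<^sub>L 'a"
  assumes "(H has_derivative blinfun_apply (T x)) (at x)"
  shows "((\<lambda>y. blinfun_apply (H y) c) has_derivative (\<lambda>a. blinfun_apply (blinfun_apply (T x) a) c)) (at x)"
  using bounded_linear.has_derivative[OF blinfun.bounded_linear_left assms] by simp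

theorem mainTheorem15:
  fixes K :: "'a::euclidean_space set" and \<nu> :: real and F :: "'a \<Rightarrow> real"
    and g :: "'a \<Rightarrow> 'a" and H :: "'a \<Rightarrow> 'a \<Rightarrow>\<^sub>L 'a" and T :: "'a \<Rightarrow> 'a \<Rightarrow>\<^sub>L 'a \<Rightarrow>\<^sub>L 'a"
  assumes "regular_cone K"
    and "normal_barrier K \<nu> F g H T"
  shows "(negative_curvature K T \<longleftrightarrow>
           (\<forall>x\<in>interior K. \<forall>h. - D3vec T x h \<in> dual_cone K)) \<and>
         ((\<forall>x\<in>interior K. \<forall>h. - D3vec T x h \<in> dual_cone K) \<longleftrightarrow>
           (\<forall>x\<in>interior K. \<forall>h. x + h \<in> interior K \<longrightarrow>
              blinfun_apply (H x) h - (g (x + h) - g x) \<in> dual_cone K))"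
proof -
  define U where "U = interior K"
  have oU: "open U" unfolding U_def by simp
  have cU: "convex U" using assms(1) unfolding U_def regular_cone_def by simp
  have C3: "C3_on U F g H T" using assms(2) unfolding U_def normal_barrier_def self_concordant_barrier_def by simp
  have dF: "\<forall>y\<in>U. (F has_derivative (\<lambda>v. g y \<bullet> v)) (at y)" using C3 unfolding C3_on_def by simp
  have dg: "\<And>y. y \<in> U \<Longrightarrow> (g has_derivative blinfun_apply (H y)) (at y)" using C3 unfolding C3_on_def by simp
  have dH: "\<And>y. y \<in> U \<Longrightarrow> (H has_derivative blinfun_apply (T y)) (at y)" using C3 unfolding C3_on_def by simp
  have symH: "\<And>y a b. y \<in> U \<Longrightarrow> blinfun_apply (H y) a \<bullet> b = blinfun_apply (H y) b \<bullet> a"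
    using schwarz[OF oU _ dF dg] by blast
  have symT: "blinfun_apply (blinfun_apply (T y) a) c \<bullet> b = blinfun_apply (blinfun_apply (T y) b) c \<bullet> a"
    if y: "y \<in> U" for y a b c
  proof -
    have df: "\<forall>z\<in>U. ((\<lambda>z. g z \<bullet> c) has_derivative (\<lambda>v. blinfun_apply (H z) c \<bullet> v)) (at z)"
    proof
      fix z assume z: "z \<in> U"
      have "((\<lambda>z. g z \<bullet> c) has_derivative (\<lambda>v. blinfun_apply (H z) v \<bullet> c)) (at z)"
        using has_derivative_inner_left[OF dg[OF z]] .
      moreover have "(\<lambda>v. blinfun_apply (H z) v \<bullet> c) = (\<lambda>v. blinfun_apply (H z) c \<bullet> v)"
        using symH[OF z] by auto
      ultimately show "((\<lambda>z. g z \<bullet> c) has_derivative (\<lambda>v. blinfun_apply (H z) c \<bullet> v)) (at z)" by simp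
    qed
    show ?thesis using schwarz[OF oU y df dH_apply[where H=H and T=T and x=y and c=c, OF dH[OF y]]] .
  qed
  have P1: "((\<lambda>s. g (x + s *\<^sub>R h) \<bullet> w) has_real_derivative (blinfun_apply (H (x + t *\<^sub>R h)) h \<bullet> w)) (at t)"
    if "x + t *\<^sub>R h \<in> U" for x h w t
    using line_deriv_vec[OF dg[OF that]] .
  have P2: "((\<lambda>s. blinfun_apply (H (x + s *\<^sub>R h)) h \<bullet> w) has_real_derivative
      (blinfun_apply (blinfun_apply (T (x + t *\<^sub>R h)) h) h \<bullet> w)) (at t)"
    if "x + t *\<^sub>R h \<in> U" for x h w t
    using line_deriv_vec[OF dH_apply[where H=H and T=T and x="x + t *\<^sub>R h" and c=h, OF dH[OF that]]] .
  have dual: "\<And>v. v \<in> dual_cone K \<longleftrightarrow> (\<forall>w\<in>K. 0 \<le> v \<bullet> w)" unfolding dual_cone_def by simp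
  have A: "(\<forall>x\<in>U. \<forall>h. - D3vec T x h \<in> dual_cone K) \<longleftrightarrow>
      (\<forall>x\<in>U. \<forall>h. \<forall>w\<in>K. blinfun_apply (blinfun_apply (T x) h) h \<bullet> w \<le> 0)"
    unfolding dual D3vec_def by auto
  have part1: "negative_curvature K T \<longleftrightarrow> (\<forall>x\<in>U. \<forall>h. - D3vec T x h \<in> dual_cone K)"
    unfolding A negative_curvature_def D3_def U_def[symmetric]
    using symT by metis
  have part2: "(\<forall>x\<in>U. \<forall>h. - D3vec T x h \<in> dual_cone K) \<longleftrightarrow>
      (\<forall>x\<in>U. \<forall>h. x + h \<in> U \<longrightarrow> blinfun_apply (H x) h - (g (x + h) - g x) \<in> dual_cone K)"
  proof
    assume neg: "\<forall>x\<in>U. \<forall>h. - D3vec T x h \<in> dual_cone K"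
    then have neg': "\<And>x h w. x \<in> U \<Longrightarrow> w \<in> K \<Longrightarrow> blinfun_apply (blinfun_apply (T x) h) h \<bullet> w \<le> 0"
      unfolding A by blast
    show "\<forall>x\<in>U. \<forall>h. x + h \<in> U \<longrightarrow> blinfun_apply (H x) h - (g (x + h) - g x) \<in> dual_cone K"
    proof (intro ballI allI impI)
      fix x h assume x: "x \<in> U" and xh: "x + h \<in> U"
      have seg: "x + t *\<^sub>R h \<in> U" if "0 \<le> t" "t \<le> 1" for t
      proof -
        have "(1 - t) *\<^sub>R x + t *\<^sub>R (x + h) \<in> U" using convexD[OF cU x xh] that by simp
        moreover have "(1 - t) *\<^sub>R x + t *\<^sub>R (x + h) = x + t *\<^sub>R h" by (simp add: algebra_simps)
        ultimately show ?thesis by simp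
      qed
      show "blinfun_apply (H x) h - (g (x + h) - g x) \<in> dual_cone K"
        unfolding dual
      proof
        fix w assume w: "w \<in> K"
        define \<phi> where "\<phi> s = g (x + s *\<^sub>R h) \<bullet> w" for s
        define \<psi> where "\<psi> s = blinfun_apply (H (x + s *\<^sub>R h)) h \<bullet> w" for s
        obtain z where z: "0 < z" "z < 1" and mz: "\<phi> 1 - \<phi> 0 = (1 - 0) * \<psi> z"
          using MVT2[of 0 1 \<phi> \<psi>] P1 seg unfolding \<phi>_def \<psi>_def by force
        have "\<psi> z \<le> \<psi> 0"
        proof -
          obtain z' where z': "0 < z'" "z' < z" and mz': "\<psi> z - \<psi> 0 = (z - 0) *
              (blinfun_apply (blinfun_apply (T (x + z' *\<^sub>R h)) h) h \<bullet> w)"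
            using MVT2[of 0 z \<psi> "\<lambda>t. blinfun_apply (blinfun_apply (T (x + t *\<^sub>R h)) h) h \<bullet> w"]
              P2 seg z unfolding \<psi>_def by force
          have "blinfun_apply (blinfun_apply (T (x + z' *\<^sub>R h)) h) h \<bullet> w \<le> 0"
            using neg' seg z z' w by simp
          then have "z * (blinfun_apply (blinfun_apply (T (x + z' *\<^sub>R h)) h) h \<bullet> w) \<le> 0"
            using z by (intro mult_nonneg_nonpos) auto
          then show ?thesis using mz' by simp
        qed
        then show "0 \<le> (blinfun_apply (H x) h - (g (x + h) - g x)) \<bullet> w"
          using mz unfolding \<phi>_def \<psi>_def by (simp add: inner_diff_left)
      qed
    qed
  next
    assume pos: "\<forall>x\<in>U. \<forall>h. x + h \<in> U \<longrightarrow> blinfun_apply (H x) h - (g (x + h) - g x) \<in> dual_cone K"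
    have pos': "\<And>x h w. x \<in> U \<Longrightarrow> x + h \<in> U \<Longrightarrow> w \<in> K \<Longrightarrow>
        0 \<le> blinfun_apply (H x) h \<bullet> w - g (x + h) \<bullet> w + g x \<bullet> w"
      using pos unfolding dual by (fastforce simp: inner_diff_left)
    show "\<forall>x\<in>U. \<forall>h. - D3vec T x h \<in> dual_cone K"
      unfolding A
    proof (intro ballI allI)
      fix x h w assume x: "x \<in> U" and w: "w \<in> K"
      show "blinfun_apply (blinfun_apply (T x) h) h \<bullet> w \<le> 0"
      proof (rule ccontr)
        assume "\<not> ?thesis"
        then have c: "0 < blinfun_apply (blinfun_apply (T x) h) h \<bullet> w" by simp
        define \<phi> where "\<phi> s = g (x + s *\<^sub>R h) \<bullet> w" for s
        define \<psi> where "\<psi> s = blinfun_apply (H (x + s *\<^sub>R h)) h \<bullet> w" for s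
        have "DERIV \<psi> 0 :> blinfun_apply (blinfun_apply (T x) h) h \<bullet> w"
          using P2[of x 0 h w] x unfolding \<psi>_def by simp
        then obtain d where d: "d > 0" and dinc: "\<And>e. e > 0 \<Longrightarrow> e < d \<Longrightarrow> \<psi> 0 < \<psi> (0 + e)"
          using DERIV_pos_inc_right c by blast
        obtain r where r: "r > 0" "ball x r \<subseteq> U" using oU x openE by blast
        define m where "m = r / (norm h + 1)"
        define e where "e = min d m / 2"
        have rh: "m > 0" unfolding m_def using r by (simp add: add_nonneg_pos)
        have e0: "e > 0" "e < d" unfolding e_def using d rh by auto
        have em: "e < m" using min.cobounded2[of d m] rh unfolding e_def by linarith
        have "e * norm h < r"
        proof -
          have "e * (norm h + 1) < r" using em unfolding m_def by (simp add: pos_less_divide_eq add_nonneg_pos)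
          then show ?thesis using e0 by (smt (verit) mult_left_mono norm_ge_zero)
        qed
        then have xe: "x + e *\<^sub>R h \<in> U" using r e0 by (auto simp: dist_norm subset_iff)
        have 1: "0 \<le> blinfun_apply (H x) (e *\<^sub>R h) \<bullet> w - g (x + e *\<^sub>R h) \<bullet> w + g x \<bullet> w"
          using pos'[OF x _ w] xe by simp
        have 2: "0 \<le> blinfun_apply (H (x + e *\<^sub>R h)) (- (e *\<^sub>R h)) \<bullet> w - g x \<bullet> w + g (x + e *\<^sub>R h) \<bullet> w"
          using pos'[OF xe _ w, of "- (e *\<^sub>R h)"] x by simp
        have "0 \<le> e * (\<psi> 0 - \<psi> e)"
          using 1 2 unfolding \<psi>_def by (simp add: blinfun.bilinear_simps algebra_simps)
        then have "\<psi> e \<le> \<psi> 0" using e0 by (simp add: zero_le_mult_iff)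
        then show False using dinc[OF e0] by simp
      qed
    qed
  qed
  show ?thesis using part1 part2 unfolding U_def by simp
qed

end
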